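(* Fix $s\in(0,2]$. As $d\to\infty$, $$\bar{\sigma}_0^2(s,d)=\frac{2}{d}+\frac{5(2-s)}{2d^2}+o\Big(\frac1{d^2}\Big),\qquad \bar{\sigma}_0(s,d)=\frac{\sqrt2}{\sqrt d}+\frac{5\sqrt2(2-s)}{8d\sqrt d}+o\Big(\frac1{d\sqrt d}\Big).$$
   Context: For integers $d\ge1$ and real $s>0$, let $I_0(s,d)=2^{s/2}\sum_{n=1}^{d}\binom{d}{n}2^{-d}\,\Gamma(n/2+s/2)/\Gamma(n/2)$ and $\bar{\sigma}_0(s,d)=I_0(s,d)^{-1/s}$. (Equivalently $I_0(s,d)=\mathbb{E}\|\max(Z,0)\|^s$ for $Z\sim\mathcal N(0,I_d)$, the maximum taken componentwise, and $\bar\sigma_0(s,d)$ is the weight standard deviation at which a zero-bias ReLU network of width $d$ with i.i.d. $\mathcal N(0,\sigma^2)$ weights preserves the $s$-th moment of the norm of layer outputs.) *)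

theory Defs
  imports "HOL-Analysis.Analysis" "HOL-Library.Landau_Symbols"
begin

definition I0 :: "real \<Rightarrow> nat \<Rightarrow> real" where
  "I0 s d = 2 powr (s/2) *
     (\<Sum>n=1..d. real (d choose n) * 2 powr (- real d) *
        Gamma (real n / 2 + s / 2) / Gamma (real n / 2))"

definition sigma0 :: "real \<Rightarrow> nat \<Rightarrow> real" where
  "sigma0 s d = I0 s d powr (- 1 / s)"

end

theory Submission
  imports Defs "HOL-Real_Asymp.Real_Asymp"
begin

lemma powr_taylor:
  fixes q x :: real and n :: nat
  assumes n: "0 < n" and qn: "q \<le> real n" and x: "x \<ge> -1/2"
  shows "\<bar>(1+x) powr q - (\<Sum>m<n. (\<Prod>j<m. (q - real j)) / fact m * x^m)\<bar>
     \<le> \<bar>\<Prod>j<n. (q - real j)\<bar> / fact n * 2 powr (real n - q) * \<bar>x\<bar>^n"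
proof (cases "x = 0")
  case True
  have "(\<Sum>m<n. (\<Prod>j<m. (q - real j)) / fact m * x^m) = (\<Sum>m<n. if m = 0 then 1 else 0)"
    using True by (intro sum.cong) auto
  also have "\<dots> = 1" using n by (simp add: sum.delta)
  finally show ?thesis using True n by simp
next
  case False
  define diff where "diff = (\<lambda>m t. (\<Prod>j<m. (q - real j)) * (1+t) powr (q - real m))"
  have D: "\<forall>m t. m < n \<and> -1/2 \<le> t \<and> t \<le> max x 0 + 1 \<longrightarrow> DERIV (diff m) t :> diff (Suc m) t"
  proof (intro allI impI)
    fix m t assume "m < n \<and> -1/2 \<le> t \<and> t \<le> max x 0 + 1"
    hence t: "1 + t > 0" by auto
    have "DERIV (\<lambda>t. (1+t) powr (q - real m)) t :> (q - real m) * (1+t) powr (q - real m - 1)"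
      using t by (auto intro!: derivative_eq_intros)
    from DERIV_cmult[OF this, of "\<Prod>j<m. (q - real j)"]
    show "DERIV (diff m) t :> diff (Suc m) t"
      unfolding diff_def by (simp add: prod.lessThan_Suc algebra_simps)
  qed
  have d0: "diff 0 = (\<lambda>t. (1+t) powr q)" unfolding diff_def by simp
  have i1: "-1/2 \<le> (0::real)" and i2: "(0::real) \<le> max x 0 + 1" and i3: "x \<le> max x 0 + 1" by auto
  from Taylor[OF n d0 D i1 i2 x i3 False]
  obtain t where t: "(if x < 0 then x < t \<and> t < 0 else 0 < t \<and> t < x)"
    and eq: "(1+x) powr q = (\<Sum>m<n. diff m 0 / fact m * (x - 0) ^ m) + diff n t / fact n * (x - 0) ^ n"
    by auto
  have t1: "1 + t \<ge> 1/2" using t x by (auto split: if_splits)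
  have pw: "(1+t) powr (q - real n) \<le> (1/2) powr (q - real n)"
    by (rule powr_mono2') (use t1 qn in auto)
  also have "(1/2::real) powr (q - real n) = 2 powr (real n - q)"
    proof -
    have "(1/2::real) powr (q - real n) = 1 / 2 powr (q - real n)" by (simp add: powr_divide)
    also have "\<dots> = 2 powr (- (q - real n))" by (subst powr_minus_divide) simp
    finally show ?thesis by simp
  qed
  finally have pw: "(1+t) powr (q - real n) \<le> 2 powr (real n - q)" .
  have "(1+x) powr q - (\<Sum>m<n. (\<Prod>j<m. (q - real j)) / fact m * x^m) = diff n t / fact n * x ^ n"
    using eq unfolding diff_def by simp
  hence "\<bar>(1+x) powr q - (\<Sum>m<n. (\<Prod>j<m. (q - real j)) / fact m * x^m)\<bar>
      = \<bar>\<Prod>j<n. (q - real j)\<bar> / fact n * (1+t) powr (q - real n) * \<bar>x\<bar>^n"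
    unfolding diff_def using t1 by (simp add: abs_mult power_abs)
  also have "\<dots> \<le> \<bar>\<Prod>j<n. (q - real j)\<bar> / fact n * 2 powr (real n - q) * \<bar>x\<bar>^n"
    by (intro mult_right_mono mult_left_mono pw) auto
  finally show ?thesis .
qed

lemma pascal_sum:
  fixes f :: "nat \<Rightarrow> real"
  shows "(\<Sum>n\<le>Suc d. real (Suc d choose n) * f n) = (\<Sum>n\<le>d. real (d choose n) * (f n + f (Suc n)))"
proof -
  have 1: "(\<Sum>n\<le>Suc d. real (Suc d choose n) * f n) = f 0 + (\<Sum>n\<le>d. real (Suc d choose Suc n) * f (Suc n))"
    by (subst sum.atMost_Suc_shift) simp
  have 2: "(\<Sum>n\<le>d. real (Suc d choose Suc n) * f (Suc n)) = (\<Sum>n\<le>d. real (d choose n) * f (Suc n)) + (\<Sum>n\<le>d. real (d choose Suc n) * f (Suc n))"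
    by (simp add: sum.distrib algebra_simps)
  have 3: "f 0 + (\<Sum>n\<le>d. real (d choose Suc n) * f (Suc n)) = (\<Sum>n\<le>Suc d. real (d choose n) * f n)"
    by (subst sum.atMost_Suc_shift) simp
  have 4: "(\<Sum>n\<le>Suc d. real (d choose n) * f n) = (\<Sum>n\<le>d. real (d choose n) * f n)"
    by (simp add: sum.atMost_Suc)
  show ?thesis using 1 2 3 4 by (simp add: sum.distrib algebra_simps)
qed

definition Sm :: "nat \<Rightarrow> nat \<Rightarrow> real" where
  "Sm k d = (\<Sum>n\<le>d. real (d choose n) * (2 * real n - real d) ^ k)"

lemma Sm_Suc: "Sm k (Suc d) = (\<Sum>n\<le>d. real (d choose n) * ((2 * real n - real d - 1) ^ k + (2 * real n - real d + 1) ^ k))"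
  unfolding Sm_def by (subst pascal_sum) (simp add: algebra_simps)

lemma Sm0: "Sm 0 d = 2 ^ d"
  unfolding Sm_def using choose_row_sum[of d] by (simp flip: of_nat_sum)

lemma Sm1: "Sm 1 d = 0"
proof (induction d)
  case 0 thus ?case by (simp add: Sm_def)
next
  case (Suc d)
  have "Sm 1 (Suc d) = 2 * Sm 1 d"
    unfolding Sm_Suc by (simp add: Sm_def sum_distrib_left algebra_simps)
  thus ?case using Suc by simp
qed

lemma Sm2: "Sm 2 d = real d * 2 ^ d"
proof (induction d)
  case 0 thus ?case by (simp add: Sm_def)
next
  case (Suc d)
  have e: "(y - 1) ^ 2 + (y + 1) ^ 2 = 2 * y^2 + 2" for y :: real
    by algebra
  have "Sm 2 (Suc d) = (\<Sum>n\<le>d. real (d choose n) * (2 * (2 * real n - real d) ^ 2 + 2))"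
    unfolding Sm_Suc using e[of "2 * real _ - real d"] by (simp add: diff_diff_eq2 algebra_simps)
  also have "\<dots> = 2 * Sm 2 d + 2 * Sm 0 d"
    unfolding Sm_def by (simp add: sum_distrib_left sum.distrib algebra_simps)
  finally have "Sm 2 (Suc d) = 2 * Sm 2 d + 2 * Sm 0 d" .
  thus ?case using Suc by (simp add: Sm0 algebra_simps)
qed

lemma Sm4: "Sm 4 d = (3 * (real d)^2 - 2 * real d) * 2 ^ d"
proof (induction d)
  case 0 thus ?case by (simp add: Sm_def)
next
  case (Suc d)
  have e: "(y - 1) ^ 4 + (y + 1) ^ 4 = 2 * y^4 + 12 * y^2 + 2" for y :: real
    by algebra
  have "Sm 4 (Suc d) = (\<Sum>n\<le>d. real (d choose n) * (2 * (2 * real n - real d) ^ 4 + 12 * (2 * real n - real d) ^ 2 + 2))"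
    unfolding Sm_Suc using e[of "2 * real _ - real d"] by (simp add: diff_diff_eq2 algebra_simps)
  also have "\<dots> = 2 * Sm 4 d + 12 * Sm 2 d + 2 * Sm 0 d"
    unfolding Sm_def by (simp add: sum_distrib_left sum.distrib algebra_simps)
  finally show ?case using Suc by (simp add: Sm0 Sm2 algebra_simps power2_eq_square)
qed

lemma ln1p_bounds:
  fixes z :: real assumes z: "z \<ge> 0"
  shows "z - z^2/2 \<le> ln (1+z) \<and> ln (1+z) \<le> z - z^2/2 + z^3/3"
proof (cases "z = 0")
  case True thus ?thesis by simp
next
  case False
  hence z: "z > 0" using z by simp
  define diff :: "nat \<Rightarrow> real \<Rightarrow> real" where "diff = (\<lambda>m t. if m = 0 then ln (1+t) else if m = 1 then 1/(1+t)
      else if m = 2 then -1/(1+t)^2 else 2/(1+t)^3)"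
  have D: "\<forall>m t. m < 3 \<and> 0 \<le> t \<and> t \<le> z \<longrightarrow> DERIV (diff m) t :> diff (Suc m) t"
  proof (intro allI impI)
    fix m :: nat and t :: real assume a: "m < 3 \<and> 0 \<le> t \<and> t \<le> z"
    hence t: "1 + t > 0" by auto
    from a have "m = 0 \<or> m = 1 \<or> m = 2" by auto
    thus "DERIV (diff m) t :> diff (Suc m) t"
    proof (elim disjE)
      assume m: "m = 0"
      have "diff m = (\<lambda>t. ln (1+t))" using m by (simp add: diff_def)
      moreover have "DERIV (\<lambda>t. ln (1+t)) t :> 1/(1+t)"
        using t by (auto intro!: derivative_eq_intros)
      ultimately show ?thesis using m by (simp add: diff_def)
    next
      assume m: "m = 1"
      have "diff m = (\<lambda>t. 1/(1+t))" using m by (simp add: diff_def)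
      moreover have "DERIV (\<lambda>t. 1/(1+t)) t :> -1/(1+t)^2"
        using t by (auto intro!: derivative_eq_intros simp: power2_eq_square)
      ultimately show ?thesis using m by (simp add: diff_def)
    next
      assume m: "m = 2"
      have "diff m = (\<lambda>t. -1/(1+t)^2)" using m by (simp add: diff_def)
      moreover have "DERIV (\<lambda>t. -1/(1+t)^2) t :> 2/(1+t)^3"
        using t apply -
        apply (rule derivative_eq_intros refl | simp)+
        apply (simp add: divide_simps)
        apply (simp add: algebra_simps power2_eq_square power3_eq_cube eval_nat_numeral)
        done
      ultimately show ?thesis using m by (simp add: diff_def)
    qed
  qed
  have d0: "diff 0 = (\<lambda>t. ln (1+t))" by (simp add: diff_def)
  from Taylor_up[OF _ d0 D, of 0] z
  obtain t where t: "0 < t" "t < z" and eq: "ln (1+z) = (\<Sum>m<3. diff m 0 / fact m * (z - 0)^m) + diff 3 t / fact 3 * (z - 0)^3"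
    by auto
  have s: "(\<Sum>m<3. diff m 0 / fact m * (z - 0)^m) = z - z^2/2"
    by (simp add: diff_def eval_nat_numeral fact_numeral)
  have r: "diff 3 t / fact 3 * (z - 0)^3 = z^3 / (3 * (1+t)^3)"
    by (simp add: diff_def fact_numeral eval_nat_numeral)
  have t3: "(1+t)^3 \<ge> 1" using t by simp
  have "z^3 / (3 * (1+t)^3) \<le> z^3/3"
    by (rule divide_left_mono) (use t3 z t in auto)
  moreover have "z^3 / (3 * (1+t)^3) \<ge> 0" using z t by simp
  ultimately show ?thesis using eq s r by simp
qed

lemma t_bound:
  fixes u p :: real assumes u: "0 < u" and p: "0 < p" "p \<le> 1"
  shows "\<bar>p * ln (1+u) - ln (1 + p*u) - (p^2 - p)/2 * u^2\<bar> \<le> u^3"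
proof -
  have A: "u - u^2/2 \<le> ln (1+u)" "ln (1+u) \<le> u - u^2/2 + u^3/3" using ln1p_bounds[of u] u by auto
  have B: "p*u - (p*u)^2/2 \<le> ln (1+p*u)" "ln (1+p*u) \<le> p*u - (p*u)^2/2 + (p*u)^3/3"
    using ln1p_bounds[of "p*u"] u p by auto
  have A1: "p * (u - u^2/2) \<le> p * ln (1+u)" "p * ln (1+u) \<le> p * (u - u^2/2 + u^3/3)"
    using A p by (auto intro: mult_left_mono)
  have pp: "p^3 \<le> 1" using p by (simp add: power_le_one)
  have u3: "u^3 > 0" using u by simp
  have c1: "p^3 * u^3 / 3 \<le> u^3" using pp u3 by (simp add: mult_right_le_one_le order_trans)
  have c2: "p * u^3 / 3 \<le> u^3" using p u3 by (simp add: mult_right_le_one_le order_trans)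
  have e1: "p * (u - u^2/2) - (p*u - (p*u)^2/2 + (p*u)^3/3) = (p^2 - p)/2 * u^2 - p^3*u^3/3"
    by (simp add: field_simps power2_eq_square power3_eq_cube)
  have e2: "p * (u - u^2/2 + u^3/3) - (p*u - (p*u)^2/2) = (p^2 - p)/2 * u^2 + p*u^3/3"
    by (simp add: field_simps power2_eq_square power3_eq_cube)
  show ?thesis using A1 B e1 e2 c1 c2 by (simp add: abs_le_iff)
qed

lemma sq_upper: fixes y :: real assumes "y > 1/2" shows "1/y^2 \<le> 1/(y-1/2) - 1/(y+1/2)"
proof -
  have eq: "1/(y-1/2) - 1/(y+1/2) = 1/(y^2 - 1/4)" using assms by (simp add: field_simps power2_eq_square)
  have yy: "y*y > (1/2)*(1/2)" using assms by (intro mult_strict_mono) auto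
  hence yp: "y^2 - 1/4 > 0" by (simp add: power2_eq_square)
  moreover have "1/y^2 \<le> 1/(y^2 - 1/4)" using yp
    by (intro divide_left_mono) (auto intro!: mult_pos_pos)
  thus ?thesis using eq by simp
qed

lemma sq_lower: fixes y :: real assumes "y > 0" shows "1/y - 1/(y+1) \<le> 1/y^2"
proof -
  have "1/y - 1/(y+1) = 1/(y^2 + y)" using assms by (simp add: field_simps power2_eq_square)
  moreover have "1/(y^2 + y) \<le> 1/y^2" using assms
    by (intro divide_left_mono) (auto intro!: mult_pos_pos add_pos_pos)
  ultimately show ?thesis by simp
qed

lemma Q2_upper: fixes x :: real assumes "x > 1/2"
  shows "(\<Sum>k\<le>n. 1/(x + real k)^2) \<le> 1/(x-1/2) - 1/(x + real n + 1/2)"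
proof (induction n)
  case 0 thus ?case using sq_upper[of x] assms by simp
next
  case (Suc n)
  have "1/(x + real (Suc n))^2 \<le> 1/(x + real (Suc n) - 1/2) - 1/(x + real (Suc n) + 1/2)"
    using sq_upper[of "x + real (Suc n)"] assms by simp
  moreover have "x + real (Suc n) - 1/2 = x + real n + 1/2" by simp
  ultimately have "1/(x + real (Suc n))^2 \<le> 1/(x + real n + 1/2) - 1/(x + real (Suc n) + 1/2)" by (simp add: algebra_simps)
  thus ?case using Suc by (simp add: algebra_simps)
qed

lemma Q2_lower: fixes x :: real assumes "x > 0"
  shows "1/x - 1/(x + real n + 1) \<le> (\<Sum>k\<le>n. 1/(x + real k)^2)"
proof (induction n)
  case 0 thus ?case using sq_lower[of x] assms by simp
next
  case (Suc n)
  have "1/(x + real (Suc n)) - 1/(x + real (Suc n) + 1) \<le> 1/(x + real (Suc n))^2"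
    using sq_lower[of "x + real (Suc n)"] assms by simp
  thus ?case using Suc by (simp add: algebra_simps)
qed

lemma ln_Gamma_series_eq:
  fixes z :: real assumes z: "z > 0" and n: "n > 0"
  shows "ln (Gamma_series z n) = ln (fact n) + z * ln (real n) - (\<Sum>k\<le>n. ln (z + real k))"
proof -
  have pos: "pochhammer z (n+1) > 0" using z by (intro pochhammer_pos)
  have "pochhammer z (n+1) = (\<Prod>k\<le>n. z + real k)"
    by (simp add: pochhammer_Suc_prod atLeast0AtMost)
  hence lp: "ln (pochhammer z (n+1)) = (\<Sum>k\<le>n. ln (z + real k))"
    using z by (simp add: ln_prod)
  have "ln (Gamma_series z n) = ln (fact n * exp (z * ln (real n))) - ln (pochhammer z (n+1))"
    unfolding Gamma_series_def using pos by (simp add: ln_div)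
  also have "ln (fact n * exp (z * ln (real n))) = ln (fact n) + z * ln (real n)"
    by (simp add: ln_mult)
  finally show ?thesis using lp by simp
qed

definition tt :: "real \<Rightarrow> real \<Rightarrow> real" where
  "tt p y = p * ln (1 + 1/y) - ln (1 + p/y)"

lemma T_tendsto:
  fixes x p :: real assumes x: "x > 0" and p: "p > 0"
  shows "(\<lambda>n. \<Sum>k\<le>n. tt p (x + real k)) \<longlonglongrightarrow> ln (Gamma (x+p)) - ln (Gamma x) - p * ln x"
proof -
  have eq: "(\<Sum>k\<le>n. tt p (x + real k)) =
      ln (Gamma_series (x+p) n) - ln (Gamma_series x n) - p * ln x + p * (ln (x + real n + 1) - ln (real n))"
    if n: "n > 0" for n
  proof -
    have tt_eq: "tt p (x + real k) = p * (ln (x + real (Suc k)) - ln (x + real k)) - (ln (x + p + real k) - ln (x + real k))" for k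
    proof -
      have y: "x + real k > 0" using x by simp
      have "1 + 1/(x + real k) = (x + real (Suc k)) / (x + real k)" using y by (simp add: field_simps)
      moreover have "1 + p/(x + real k) = (x + p + real k) / (x + real k)" using y by (simp add: field_simps)
      ultimately show ?thesis unfolding tt_def using y x p by (simp add: ln_div add_pos_pos)
    qed
    have tel: "(\<Sum>k\<le>n. ln (x + real (Suc k)) - ln (x + real k)) = ln (x + real n + 1) - ln x"
      using sum_lessThan_telescope[of "\<lambda>k. ln (x + real k)" "Suc n"]
      by (simp add: lessThan_Suc_atMost algebra_simps)
    have "(\<Sum>k\<le>n. tt p (x + real k)) = p * (\<Sum>k\<le>n. ln (x + real (Suc k)) - ln (x + real k))
        - ((\<Sum>k\<le>n. ln (x + p + real k)) - (\<Sum>k\<le>n. ln (x + real k)))"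
      unfolding tt_eq by (simp add: sum_subtractf sum_distrib_left right_diff_distrib)
    also have "\<dots> = ln (Gamma_series (x+p) n) - ln (Gamma_series x n) - p * ln x + p * (ln (x + real n + 1) - ln (real n))"
    proof -
      have xp: "x + p > 0" using x p by simp
      show ?thesis unfolding tel ln_Gamma_series_eq[OF x n] ln_Gamma_series_eq[OF xp n]
        by (simp add: algebra_simps)
    qed
    finally show ?thesis .
  qed
  have g1: "(\<lambda>n. ln (Gamma_series (x+p) n)) \<longlonglongrightarrow> ln (Gamma (x+p))"
  proof -
    have "Gamma (x+p) > 0" by (rule Gamma_real_pos) (use x p in simp)
    thus ?thesis by (intro tendsto_ln Gamma_series_LIMSEQ) simp
  qed
  have g2: "(\<lambda>n. ln (Gamma_series x n)) \<longlonglongrightarrow> ln (Gamma x)"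
  proof -
    have "Gamma x > 0" by (rule Gamma_real_pos) (use x in simp)
    thus ?thesis by (intro tendsto_ln Gamma_series_LIMSEQ) simp
  qed
  have l0: "((\<lambda>y. ln (x + y + 1) - ln y) \<longlongrightarrow> 0) at_top"
    by real_asymp
  have l1: "(\<lambda>n. ln (x + real n + 1) - ln (real n)) \<longlonglongrightarrow> 0"
    using filterlim_compose[OF l0 filterlim_real_sequentially] by (simp add: o_def)
  have "(\<lambda>n. ln (Gamma_series (x+p) n) - ln (Gamma_series x n) - p * ln x + p * (ln (x + real n + 1) - ln (real n)))
     \<longlonglongrightarrow> ln (Gamma (x+p)) - ln (Gamma x) - p * ln x + p * 0"
    by (intro tendsto_intros g1 g2 l1)
  hence "(\<lambda>n. ln (Gamma_series (x+p) n) - ln (Gamma_series x n) - p * ln x + p * (ln (x + real n + 1) - ln (real n)))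
     \<longlonglongrightarrow> ln (Gamma (x+p)) - ln (Gamma x) - p * ln x" by simp
  moreover have "eventually (\<lambda>n. ln (Gamma_series (x+p) n) - ln (Gamma_series x n) - p * ln x + p * (ln (x + real n + 1) - ln (real n))
      = (\<Sum>k\<le>n. tt p (x + real k))) sequentially"
    using eventually_gt_at_top[of "0::nat"] by eventually_elim (simp add: eq)
  ultimately show ?thesis by (rule Lim_transform_eventually)
qed

lemma tt_bound: fixes y p :: real assumes y: "y > 0" and p: "0 < p" "p \<le> 1"
  shows "\<bar>tt p y - (p^2 - p)/2 / y^2\<bar> \<le> 1 / y^3"
  using t_bound[of "1/y" p] y p by (simp add: tt_def power_one_over)

lemma B_bounds: fixes x :: real assumes x: "x \<ge> 1"
  shows "1/(x-1/2) \<le> 1/x + 1/x^2" "1/(x-1/2) \<le> 2/x"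
proof -
  have x0: "x > 0" "x - 1/2 > 0" using x by auto
  have "1/(x-1/2) - 1/x = 1 / (2*x*(x-1/2))" using x0 by (simp add: field_simps)
  also have "\<dots> \<le> 1 / x^2"
    using x0 x by (intro divide_left_mono) (auto simp: power2_eq_square algebra_simps intro!: mult_pos_pos)
  finally show "1/(x-1/2) \<le> 1/x + 1/x^2" by simp
  show "1/(x-1/2) \<le> 2/x" using x0 x by (simp add: divide_simps)
qed

lemma L_bound:
  fixes x p :: real assumes x: "x \<ge> 1" and p: "0 < p" "p \<le> 1"
  defines "c0 \<equiv> (p^2 - p)/2"
  shows "\<bar>ln (Gamma (x+p)) - ln (Gamma x) - p * ln x - c0 / x\<bar> \<le> 3 / x^2"
proof -
  have x0: "x > 0" using x by simp
  have c0: "-1 \<le> c0" "c0 \<le> 0"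
  proof -
    have h1: "p * p \<le> p * 1" using p by (intro mult_left_mono) auto
    have h2: "p*p \<ge> 0" by simp
    have h3: "p*p - p \<ge> -1" "p*p - p \<le> 0" using h1 h2 p by linarith+
    show "-1 \<le> c0" unfolding c0_def power2_eq_square using h3 by simp
    show "c0 \<le> 0" unfolding c0_def power2_eq_square using h3 by simp
  qed
  define B where "B = 1/(x-1/2)"
  have B: "B \<le> 1/x + 1/x^2" "B \<le> 2/x" using B_bounds[OF x] by (auto simp: B_def)
  define Q2 where "Q2 n = (\<Sum>k\<le>n. 1/(x + real k)^2)" for n
  define Q3 where "Q3 n = (\<Sum>k\<le>n. 1/(x + real k)^3)" for n
  have Q2u: "Q2 n \<le> B" for n
  proof -
    have "Q2 n \<le> 1/(x-1/2) - 1/(x + real n + 1/2)" unfolding Q2_def using x by (intro Q2_upper) auto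
    also have "\<dots> \<le> B" using x0 by (simp add: B_def)
    finally show ?thesis .
  qed
  have Q2l: "1/x - 1/(x + real n + 1) \<le> Q2 n" for n unfolding Q2_def using Q2_lower[OF x0] .
  have Q3u: "Q3 n \<le> 2/x^2" for n
  proof -
    have "Q3 n \<le> (\<Sum>k\<le>n. (1/x) * (1/(x + real k)^2))"
      unfolding Q3_def
    proof (intro sum_mono)
      fix k assume "k \<in> {..n}"
      have yk: "x + real k \<ge> x" by simp
      have "1/(x + real k)^3 = (1/(x + real k)) * (1/(x + real k)^2)" by (simp add: power3_eq_cube power2_eq_square)
      also have "\<dots> \<le> (1/x) * (1/(x + real k)^2)"
        using x0 yk by (intro mult_right_mono divide_left_mono) auto
      finally show "1/(x + real k)^3 \<le> (1/x) * (1/(x + real k)^2)" .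
    qed
    also have "\<dots> = (1/x) * Q2 n" unfolding Q2_def by (simp add: sum_distrib_left)
    also have "\<dots> \<le> (1/x) * (2/x)" using Q2u[of n] B x0 by (intro mult_left_mono) auto
    finally show ?thesis by (simp add: power2_eq_square)
  qed
  define T where "T n = (\<Sum>k\<le>n. tt p (x + real k))" for n
  have Tlu: "c0 * Q2 n - Q3 n \<le> T n \<and> T n \<le> c0 * Q2 n + Q3 n" for n
  proof -
    have "\<bar>T n - (c0 * Q2 n)\<bar> \<le> Q3 n"
    proof -
      have "T n - c0 * Q2 n = (\<Sum>k\<le>n. tt p (x + real k) - c0 / (x + real k)^2)"
        unfolding T_def Q2_def by (simp add: sum_subtractf sum_distrib_left)
      also have "\<bar>\<dots>\<bar> \<le> (\<Sum>k\<le>n. \<bar>tt p (x + real k) - c0 / (x + real k)^2\<bar>)" by (rule sum_abs)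
      also have "\<dots> \<le> Q3 n" unfolding Q3_def c0_def
        by (intro sum_mono tt_bound) (use x0 p in auto)
      finally show ?thesis .
    qed
    thus ?thesis by (simp add: abs_le_iff)
  qed
  define L where "L = ln (Gamma (x+p)) - ln (Gamma x) - p * ln x"
  have TL: "T \<longlonglongrightarrow> L" unfolding T_def L_def using T_tendsto[OF x0 p(1)] .
  have lo: "c0 / x - 3/x^2 \<le> T n" for n
  proof -
    have "c0 * B \<le> c0 * Q2 n" using c0 Q2u[of n] by (intro mult_left_mono_neg) auto
    moreover have "c0 * (1/x + 1/x^2) \<le> c0 * B" using c0 B by (intro mult_left_mono_neg) auto
    moreover have "c0 * (1/x + 1/x^2) = c0/x + c0/x^2" by (simp add: algebra_simps)
    moreover have "-1/x^2 \<le> c0/x^2" using c0 x0 by (simp add: divide_simps)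
    ultimately show ?thesis using Tlu[of n] Q3u[of n] by (simp add: diff_divide_distrib)
  qed
  have up: "T n \<le> c0 * (1/x - 1/(x + real n + 1)) + 2/x^2" for n
  proof -
    have "c0 * Q2 n \<le> c0 * (1/x - 1/(x + real n + 1))" using c0 Q2l[of n] by (intro mult_left_mono_neg) auto
    thus ?thesis using Tlu[of n] Q3u[of n] by linarith
  qed
  have lim: "(\<lambda>n. c0 * (1/x - 1/(x + real n + 1)) + 2/x^2) \<longlonglongrightarrow> c0 * (1/x - 0) + 2/x^2"
  proof -
    have "(\<lambda>n. 1/(x + real n + 1)) \<longlonglongrightarrow> 0"
    proof -
      have l0: "((\<lambda>y. 1/(x + y + 1)) \<longlongrightarrow> 0) at_top" by real_asymp
      show ?thesis using filterlim_compose[OF l0 filterlim_real_sequentially] by (simp add: o_def)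
    qed
    thus ?thesis by (intro tendsto_intros)
  qed
  have "c0 / x - 3/x^2 \<le> L" using TL lo by (intro LIMSEQ_le_const) auto
  moreover have "L \<le> c0 / x + 2/x^2"
  proof -
    have "L \<le> c0 * (1/x - 0) + 2/x^2" using TL lim up by (intro LIMSEQ_le) auto
    thus ?thesis by simp
  qed
  ultimately show ?thesis unfolding L_def by (simp add: abs_le_iff)
qed

lemma gamma_ratio:
  fixes x p :: real assumes x: "x \<ge> 8" and p: "0 < p" "p \<le> 1"
  shows "\<bar>Gamma (x+p) / Gamma x - x powr p * (1 + ((p^2 - p)/2) / x)\<bar> \<le> 19 * x powr (p - 2)"
proof -
  define c0 where "c0 = (p^2 - p)/2"
  define L where "L = ln (Gamma (x+p)) - ln (Gamma x) - p * ln x"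
  have x0: "x > 0" "x \<ge> 1" using x by auto
  have LB: "\<bar>L - c0/x\<bar> \<le> 3/x^2" unfolding L_def c0_def using L_bound[OF x0(2) p] .
  have c0: "-1 \<le> c0" "c0 \<le> 0"
  proof -
    have h1: "p * p \<le> p * 1" using p by (intro mult_left_mono) auto
    have h2: "p*p \<ge> 0" by simp
    have h3: "p*p - p \<ge> -1" "p*p - p \<le> 0" using h1 h2 p by linarith+
    show "-1 \<le> c0" unfolding c0_def power2_eq_square using h3 by simp
    show "c0 \<le> 0" unfolding c0_def power2_eq_square using h3 by simp
  qed
  have gp: "Gamma (x+p) > 0" "Gamma x > 0" by (rule Gamma_real_pos, use x0 p in simp)+
  have eq: "Gamma (x+p) / Gamma x = x powr p * exp L"
    unfolding L_def using gp x0
    by (simp add: exp_diff powr_def exp_ln)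
  have a1: "-1/x \<le> c0/x" "c0/x \<le> 0" using c0 x0 by (simp_all add: divide_simps)
  have a2: "3/x^2 \<le> 3/x" using x0 by (intro divide_left_mono) (auto simp: power2_eq_square)
  have a3: "4/x = 1/x + 3/x" by (simp add: add_divide_distrib[symmetric])
  have a4: "L - c0/x \<le> 3/x^2" "c0/x - L \<le> 3/x^2" using LB by (simp_all add: abs_le_iff)
  have "\<bar>L\<bar> \<le> 4/x" using a1 a2 a3 a4 by (simp add: abs_le_iff)
  also have "4/x \<le> 1/2" using x by (simp add: divide_simps)
  finally have Lh: "\<bar>L\<bar> \<le> 1/2" .
  have L2: "L^2 \<le> 16/x^2"
  proof -
    have "\<bar>L\<bar> \<le> 4/x" using \<open>\<bar>L\<bar> \<le> 4/x\<close> .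
    hence "\<bar>L\<bar>^2 \<le> (4/x)^2" by (intro power_mono) auto
    thus ?thesis by (simp add: power_divide)
  qed
  obtain t where t: "\<bar>t\<bar> \<le> \<bar>L\<bar>" and et: "exp L = (\<Sum>m<2. L^m / fact m) + exp t / fact 2 * L^2"
    using Maclaurin_exp_le[of L 2] by blast
  have "exp t \<le> 1 + 2 * \<bar>t\<bar>" using exp_bound_lemma[of t] t Lh by simp
  hence ext: "exp t \<le> 2" using t Lh by linarith
  have "\<bar>exp L - 1 - L\<bar> = exp t / 2 * L^2" using et by (simp add: eval_nat_numeral)
  also have "\<dots> \<le> 1 * L^2" using ext by (intro mult_right_mono) auto
  finally have E1: "\<bar>exp L - 1 - L\<bar> \<le> 16/x^2" using L2 by simp
  have E2: "\<bar>exp L - (1 + c0/x)\<bar> \<le> 19/x^2" using E1 LB by (simp add: abs_le_iff)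
  have "Gamma (x+p) / Gamma x - x powr p * (1 + c0/x) = x powr p * (exp L - (1 + c0/x))"
    using eq by (simp add: algebra_simps)
  hence "\<bar>Gamma (x+p) / Gamma x - x powr p * (1 + c0/x)\<bar> = x powr p * \<bar>exp L - (1 + c0/x)\<bar>"
    by (simp add: abs_mult)
  also have "\<dots> \<le> x powr p * (19/x^2)" using E2 by (intro mult_left_mono) auto
  also have "x powr p * (19/x^2) = 19 * x powr (p - 2)"
    using x0 by (simp add: powr_diff powr_numeral)
  finally show ?thesis unfolding c0_def .
qed

definition hh :: "real \<Rightarrow> nat \<Rightarrow> real" where
  "hh p n = 2 powr p * Gamma (real n / 2 + p) / Gamma (real n / 2)"

definition rr :: "real \<Rightarrow> nat \<Rightarrow> real" where
  "rr p n = (if n = 0 then 0 else hh p n - real n powr p - p * (p - 1) * real n powr (p - 1))"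

lemma rr_large:
  assumes p: "0 < p" "p \<le> 1" and n: "n \<ge> 16"
  shows "\<bar>rr p n\<bar> \<le> 76 * real n powr (p - 2)"
proof -
  define x where "x = real n / 2"
  have x: "x \<ge> 8" using n by (simp add: x_def)
  have x0: "x > 0" using x by simp
  have nx: "real n = 2 * x" by (simp add: x_def)
  have G: "\<bar>Gamma (x+p) / Gamma x - x powr p * (1 + ((p^2 - p)/2) / x)\<bar> \<le> 19 * x powr (p - 2)"
    by (rule gamma_ratio[OF x p])
  have np: "real n powr p = 2 powr p * x powr p" unfolding nx using x0 by (simp add: powr_mult)
  have np1: "real n powr (p - 1) = real n powr p / real n" using x0 nx by (simp add: powr_diff)
  have np2: "real n powr (p - 2) = real n powr p / (real n)^2" using x0 nx by (simp add: powr_diff powr_numeral)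
  have xp2: "x powr (p - 2) = x powr p / x^2" using x0 by (simp add: powr_diff powr_numeral)
  have "hh p n - real n powr p - p * (p - 1) * real n powr (p - 1)
      = 2 powr p * (Gamma (x+p) / Gamma x - x powr p * (1 + ((p^2 - p)/2) / x))"
    unfolding hh_def np1 np x_def[symmetric] using x0
    by (simp add: field_simps power2_eq_square nx)
  hence "\<bar>rr p n\<bar> = 2 powr p * \<bar>Gamma (x+p) / Gamma x - x powr p * (1 + ((p^2 - p)/2) / x)\<bar>"
    using n by (simp add: rr_def abs_mult)
  also have "\<dots> \<le> 2 powr p * (19 * x powr (p - 2))" using G by (intro mult_left_mono) auto
  also have "2 powr p * (19 * x powr (p - 2)) = 76 * (2 powr p * x powr p / (2 * x)^2)"
    unfolding xp2 using x0 by (simp add: field_simps power2_eq_square)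
  also have "\<dots> = 76 * real n powr (p - 2)"
    by (subst np2, subst np, simp add: nx)
  finally show ?thesis .
qed

lemma rr_bounded:
  assumes p: "0 < p" "p \<le> 1"
  shows "\<exists>M\<ge>0. \<forall>n. \<bar>rr p n\<bar> \<le> M"
proof (intro exI[of _ "(\<Sum>k<16. \<bar>rr p k\<bar>) + 76"] conjI allI)
  show "0 \<le> (\<Sum>k<16. \<bar>rr p k\<bar>) + 76" by (simp add: sum_nonneg)
  fix n
  show "\<bar>rr p n\<bar> \<le> (\<Sum>k<16. \<bar>rr p k\<bar>) + 76"
  proof (cases "n < 16")
    case True
    hence "\<bar>rr p n\<bar> \<le> (\<Sum>k<16. \<bar>rr p k\<bar>)" by (intro member_le_sum) auto
    thus ?thesis by simp
  next
    case False
    hence "\<bar>rr p n\<bar> \<le> 76 * real n powr (p - 2)" using rr_large[OF p] by simp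
    also have "real n powr (p - 2) \<le> 1 powr (p - 2)"
      using False p by (intro powr_mono2') auto
    finally have "\<bar>rr p n\<bar> \<le> 76" by simp
    thus ?thesis by (simp add: sum_nonneg add_increasing)
  qed
qed

definition K1c :: "real \<Rightarrow> real" where
  "K1c p = \<bar>\<Prod>j<3. (p - real j)\<bar> / fact 3 * 2 powr (3 - p) + 32"

definition K2c :: "real \<Rightarrow> real" where
  "K2c p = \<bar>\<Prod>j<1. (p - 1 - real j)\<bar> / fact 1 * 2 powr (1 - (p - 1)) + 2"

lemma abs4: "0 \<le> (a::real) \<Longrightarrow> a \<le> 1 \<Longrightarrow> \<bar>b\<bar> \<le> 1 \<Longrightarrow> \<bar>c\<bar> \<le> 1 \<Longrightarrow> \<bar>a - (1 + b + c)\<bar> \<le> 4"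
  by arith

lemma pw1:
  fixes p y :: real assumes p: "0 < p" "p \<le> 1" and y: "y \<ge> -1"
  shows "\<bar>(1+y) powr p - (1 + p*y + (p^2-p)/2*y^2)\<bar> \<le> K1c p * \<bar>y\<bar>^3"
proof (cases "y \<ge> -1/2")
  case True
  have T: "\<bar>(1+y) powr p - (\<Sum>m<3. (\<Prod>j<m. (p - real j)) / fact m * y^m)\<bar>
     \<le> \<bar>\<Prod>j<3. (p - real j)\<bar> / fact 3 * 2 powr (real 3 - p) * \<bar>y\<bar>^3"
    by (rule powr_taylor) (use p True in auto)
  have s: "(\<Sum>m<3. (\<Prod>j<m. (p - real j)) / fact m * y^m) = 1 + p*y + (p^2-p)/2*y^2"
    by (simp add: eval_nat_numeral power2_eq_square algebra_simps)
  have "\<bar>\<Prod>j<3. (p - real j)\<bar> / fact 3 * 2 powr (real 3 - p) * \<bar>y\<bar>^3 \<le> K1c p * \<bar>y\<bar>^3"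
    unfolding K1c_def by (intro mult_right_mono) auto
  thus ?thesis using T s by simp
next
  case False
  have y1: "\<bar>y\<bar> \<le> 1" "\<bar>y\<bar> \<ge> 1/2" using y False by auto
  have y3: "\<bar>y\<bar>^3 \<ge> (1/2)^3" using y1 by (intro power_mono) auto
  have a: "0 \<le> (1+y) powr p" "(1+y) powr p \<le> 1"
  proof -
    show "0 \<le> (1+y) powr p" by simp
    have "(1+y) powr p \<le> 1 powr p" using y False p by (intro powr_mono2) auto
    thus "(1+y) powr p \<le> 1" by simp
  qed
  have py: "\<bar>p*y\<bar> \<le> 1" using p y1 by (simp add: abs_mult mult_le_one)
  have c0: "\<bar>(p^2-p)/2\<bar> \<le> 1"
  proof -
    have h1: "p * p \<le> p * 1" using p by (intro mult_left_mono) auto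
    have h2: "p*p \<ge> 0" by simp
    have h3: "p*p - p \<ge> -1" "p*p - p \<le> 0" using h1 h2 p by linarith+
    thus ?thesis by (simp add: power2_eq_square abs_le_iff)
  qed
  have "\<bar>y\<bar>^2 \<le> 1^2" using y1 by (intro power_mono) auto
  hence yy: "y^2 \<le> 1" by simp
  have c0y: "\<bar>(p^2-p)/2*y^2\<bar> \<le> 1"
  proof -
    have "\<bar>(p^2-p)/2\<bar> * y^2 \<le> 1 * 1" by (rule mult_mono) (use c0 yy in auto)
    moreover have "\<bar>(p^2-p)/2*y^2\<bar> = \<bar>(p^2-p)/2\<bar> * y^2" by (simp only: abs_mult abs_power2)
    ultimately show ?thesis by simp
  qed
  have "\<bar>(1+y) powr p - (1 + p*y + (p^2-p)/2*y^2)\<bar> \<le> 4" using a py c0y by (rule abs4)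
  also have "4 \<le> 32 * \<bar>y\<bar>^3" using y3 by (simp add: power_divide)
  also have "\<dots> \<le> K1c p * \<bar>y\<bar>^3" unfolding K1c_def by (intro mult_right_mono) auto
  finally show ?thesis .
qed

lemma pw2:
  fixes p y :: real assumes p: "0 < p" "p \<le> 1" and y: "y \<ge> -1/2"
  shows "\<bar>(1+y) powr (p-1) - 1\<bar> \<le> K2c p * \<bar>y\<bar>"
proof -
  have T: "\<bar>(1+y) powr (p-1) - (\<Sum>m<1. (\<Prod>j<m. (p - 1 - real j)) / fact m * y^m)\<bar>
     \<le> \<bar>\<Prod>j<1. (p - 1 - real j)\<bar> / fact 1 * 2 powr (real 1 - (p - 1)) * \<bar>y\<bar>^1"
    by (rule powr_taylor) (use p y in auto)
  have "\<bar>\<Prod>j<1. (p - 1 - real j)\<bar> / fact 1 * 2 powr (real 1 - (p - 1)) * \<bar>y\<bar>^1 \<le> K2c p * \<bar>y\<bar>"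
    unfolding K2c_def by (simp add: distrib_right)
  thus ?thesis using T by simp
qed

lemma K_nonneg: "K1c p \<ge> 0" "K2c p \<ge> 0"
  unfolding K1c_def K2c_def by (auto intro!: add_nonneg_nonneg mult_nonneg_nonneg)

definition wt :: "nat \<Rightarrow> nat \<Rightarrow> real" where "wt d n = real (d choose n) / 2^d"
definition xv :: "nat \<Rightarrow> nat \<Rightarrow> real" where "xv d n = (2 * real n - real d) / real d"

lemma wt_nonneg: "wt d n \<ge> 0" by (simp add: wt_def)

lemma mom_k: "(\<Sum>n\<le>d. wt d n * xv d n ^ k) = Sm k d / (2^d * real d ^ k)"
  unfolding Sm_def wt_def xv_def by (simp add: sum_divide_distrib power_divide)

lemma mom0: "(\<Sum>n\<le>d. wt d n) = 1"
  using mom_k[of d 0] by (simp add: Sm0)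

lemma mom1: "(\<Sum>n\<le>d. wt d n * xv d n) = 0"
  using mom_k[of d 1] Sm1[of d] by simp

lemma mom2: assumes "d > 0" shows "(\<Sum>n\<le>d. wt d n * xv d n ^ 2) = 1 / real d"
  using mom_k[of d 2] assms by (simp add: Sm2 power2_eq_square)

lemma mom4: assumes "d > 0" shows "(\<Sum>n\<le>d. wt d n * xv d n ^ 4) \<le> 3 / (real d)^2"
proof -
  have "(\<Sum>n\<le>d. wt d n * xv d n ^ 4) = (3 * (real d)^2 - 2 * real d) / real d ^ 4"
    using mom_k[of d 4] by (simp add: Sm4)
  also have "\<dots> \<le> (3 * (real d)^2) / real d ^ 4"
    by (intro divide_right_mono) auto
  also have "\<dots> = 3 / (real d)^2" using assms by (simp add: field_simps eval_nat_numeral)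
  finally show ?thesis .
qed

lemma amgm1: fixes x l :: real assumes l: "l > 0" shows "\<bar>x\<bar> \<le> (l * x^2 + 1/l) / 2"
proof -
  have "0 \<le> (l * \<bar>x\<bar> - 1)^2" by simp
  hence "2 * l * \<bar>x\<bar> \<le> l^2 * x^2 + 1" by (simp add: power2_eq_square algebra_simps)
  hence "2 * l * \<bar>x\<bar> / l \<le> (l^2 * x^2 + 1) / l" using l by (intro divide_right_mono) auto
  thus ?thesis using l by (simp add: field_simps power2_eq_square)
qed

lemma amgm3: fixes x l :: real assumes l: "l > 0" shows "\<bar>x\<bar>^3 \<le> (l * x^4 + x^2/l) / 2"
proof -
  have "\<bar>x\<bar> * x^2 \<le> ((l * x^2 + 1/l) / 2) * x^2" using amgm1[OF l, of x] by (intro mult_right_mono) auto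
  moreover have "\<bar>x\<bar>^3 = \<bar>x\<bar> * x^2" by (simp add: power2_eq_square power3_eq_cube abs_mult_self_eq)
  ultimately show ?thesis by (simp add: field_simps eval_nat_numeral)
qed

lemma abs_mom1: assumes d: "d > 0" shows "(\<Sum>n\<le>d. wt d n * \<bar>xv d n\<bar>) \<le> 1 / sqrt (real d)"
proof -
  define l where "l = sqrt (real d)"
  have l: "l > 0" using d by (simp add: l_def)
  have ll: "l^2 = real d" by (simp add: l_def)
  have "(\<Sum>n\<le>d. wt d n * \<bar>xv d n\<bar>) \<le> (\<Sum>n\<le>d. wt d n * ((l * xv d n ^ 2 + 1/l) / 2))"
    by (intro sum_mono mult_left_mono amgm1 l wt_nonneg)
  also have "\<dots> = (\<Sum>n\<le>d. (l * (wt d n * xv d n ^ 2) + (1/l) * wt d n) / 2)"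
    by (intro sum.cong refl) (simp add: algebra_simps)
  also have "\<dots> = (l * (\<Sum>n\<le>d. wt d n * xv d n ^ 2) + (1/l) * (\<Sum>n\<le>d. wt d n)) / 2"
    by (simp only: sum_divide_distrib[symmetric] sum.distrib sum_distrib_left)
  also have "\<dots> = (l / real d + 1/l) / 2" using d by (simp add: mom0 mom2)
  also have "\<dots> = 1 / l" using l ll d by (simp add: field_simps power2_eq_square)
  finally show ?thesis by (simp add: l_def)
qed

lemma abs_mom3: assumes d: "d > 0" shows "(\<Sum>n\<le>d. wt d n * \<bar>xv d n\<bar>^3) \<le> 2 / (real d * sqrt (real d))"
proof -
  define l where "l = sqrt (real d)"
  have l: "l > 0" using d by (simp add: l_def)
  have ll: "l^2 = real d" by (simp add: l_def)
  have "(\<Sum>n\<le>d. wt d n * \<bar>xv d n\<bar>^3) \<le> (\<Sum>n\<le>d. wt d n * ((l * xv d n ^ 4 + xv d n ^ 2 / l) / 2))"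
    by (intro sum_mono mult_left_mono amgm3 l wt_nonneg)
  also have "\<dots> = (\<Sum>n\<le>d. (l * (wt d n * xv d n ^ 4) + (1/l) * (wt d n * xv d n ^ 2)) / 2)"
    by (intro sum.cong refl) (simp add: algebra_simps)
  also have "\<dots> = (l * (\<Sum>n\<le>d. wt d n * xv d n ^ 4) + (1/l) * (\<Sum>n\<le>d. wt d n * xv d n ^ 2)) / 2"
    by (simp only: sum_divide_distrib[symmetric] sum.distrib sum_distrib_left)
  also have "\<dots> \<le> (l * (3 / (real d)^2) + (1/l) * (1 / real d)) / 2"
  proof -
    have "l * (\<Sum>n\<le>d. wt d n * xv d n ^ 4) \<le> l * (3 / (real d)^2)"
      using l mom4[OF d] by (intro mult_left_mono) auto
    thus ?thesis using mom2[OF d] by (intro divide_right_mono) auto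
  qed
  also have "\<dots> = 2 / (real d * l)" using l unfolding ll[symmetric] by (simp add: field_simps power2_eq_square eval_nat_numeral)
  finally show ?thesis by (simp add: l_def)
qed

lemma I0_expand:
  fixes s :: real assumes s: "s > 0"
  defines "p \<equiv> s / 2"
  shows "I0 s d = (\<Sum>n\<le>d. wt d n * (real n powr p + p * (p - 1) * real n powr (p - 1) + rr p n))"
proof -
  have "I0 s d = (\<Sum>n=1..d. wt d n * hh p n)"
    unfolding I0_def hh_def wt_def p_def sum_distrib_left
  proof (intro sum.cong refl)
    fix n assume "n \<in> {1..d}"
    have "(2::real) powr (- real d) = 1 / 2^d" by (simp add: powr_minus_divide powr_realpow)
    thus "2 powr (s / 2) * (real (d choose n) * 2 powr - real d * Gamma (real n / 2 + s / 2) / Gamma (real n / 2)) =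
         real (d choose n) / 2 ^ d * (2 powr (s / 2) * Gamma (real n / 2 + s / 2) / Gamma (real n / 2))"
      by simp
  qed
  also have "\<dots> = (\<Sum>n=1..d. wt d n * (real n powr p + p * (p - 1) * real n powr (p - 1) + rr p n))"
    by (intro sum.cong refl) (auto simp: rr_def)
  also have "\<dots> = (\<Sum>n\<le>d. wt d n * (real n powr p + p * (p - 1) * real n powr (p - 1) + rr p n))"
  proof -
    have e: "{..d} = insert 0 {1..d}" by auto
    show ?thesis unfolding e by (subst sum.insert) (auto simp: rr_def)
  qed
  finally show ?thesis .
qed

lemma pointwise:
  fixes p :: real and d n :: nat and M :: real
  assumes p: "0 < p" "p \<le> 1" and d: "d \<ge> 128" and n: "n \<le> d"
    and M: "\<forall>n. \<bar>rr p n\<bar> \<le> M" "M \<ge> 0"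
  defines "mu \<equiv> real d / 2"
  defines "x \<equiv> xv d n"
  shows "\<bar>real n powr p - mu powr p * (1 + p*x + (p^2-p)/2*x^2)\<bar> \<le> mu powr p * K1c p * \<bar>x\<bar>^3"
    and "\<bar>real n powr (p-1) - mu powr (p-1)\<bar> \<le> K2c p * mu powr (p-1) * \<bar>x\<bar> + 16 * x^4"
    and "\<bar>rr p n\<bar> \<le> 304 * mu powr (p-2) + 16 * M * x^4"
proof -
  have d0: "real d > 0" using d by simp
  have mu: "mu \<ge> 64" using d by (simp add: mu_def)
  have nx: "real n = mu * (1 + x)" unfolding mu_def x_def xv_def using d0 by (simp add: field_simps)
  have x1: "x \<ge> -1" unfolding x_def xv_def using d0 by (simp add: field_simps)
  have x1': "1 + x \<ge> 0" using x1 by simp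
  show "\<bar>real n powr p - mu powr p * (1 + p*x + (p^2-p)/2*x^2)\<bar> \<le> mu powr p * K1c p * \<bar>x\<bar>^3"
  proof -
    have "real n powr p = mu powr p * (1+x) powr p" unfolding nx by (simp add: powr_mult)
    hence "\<bar>real n powr p - mu powr p * (1 + p*x + (p^2-p)/2*x^2)\<bar>
        = mu powr p * \<bar>(1+x) powr p - (1 + p*x + (p^2-p)/2*x^2)\<bar>"
      by (simp add: right_diff_distrib[symmetric] abs_mult)
    also have "\<dots> \<le> mu powr p * (K1c p * \<bar>x\<bar>^3)"
      by (intro mult_left_mono pw1 p x1) auto
    finally show ?thesis by simp
  qed
  show "\<bar>real n powr (p-1) - mu powr (p-1)\<bar> \<le> K2c p * mu powr (p-1) * \<bar>x\<bar> + 16 * x^4"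
  proof (cases "x \<ge> -1/2")
    case True
    have "real n powr (p-1) = mu powr (p-1) * (1+x) powr (p-1)" unfolding nx by (simp add: powr_mult)
    hence "\<bar>real n powr (p-1) - mu powr (p-1)\<bar> = \<bar>mu powr (p-1) * ((1+x) powr (p-1) - 1)\<bar>"
      by (simp add: algebra_simps)
    also have "\<dots> = mu powr (p-1) * \<bar>(1+x) powr (p-1) - 1\<bar>" by (simp add: abs_mult)
    also have "\<dots> \<le> mu powr (p-1) * (K2c p * \<bar>x\<bar>)"
      by (intro mult_left_mono pw2 p True) auto
    also have "\<dots> \<le> K2c p * mu powr (p-1) * \<bar>x\<bar> + 16 * x^4" by simp
    finally show ?thesis .
  next
    case False
    have xa: "\<bar>x\<bar> \<ge> 1/2" using False by simp
    have x4: "x^4 \<ge> (1/2)^4"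
    proof -
      have "\<bar>x\<bar>^4 \<ge> (1/2)^4" using xa by (intro power_mono) auto
      thus ?thesis by (simp add: power_abs[symmetric] eval_nat_numeral abs_mult_self_eq)
    qed
    have n1: "real n powr (p-1) \<le> 1"
    proof (cases "n = 0")
      case True thus ?thesis by simp
    next
      case False
      hence "real n powr (p-1) \<le> 1 powr (p-1)" using p by (intro powr_mono2') auto
      thus ?thesis by simp
    qed
    have n0: "real n powr (p-1) \<ge> 0" by simp
    have m0: "mu powr (p-1) \<ge> 0" by simp
    have K2: "K2c p \<ge> 2" unfolding K2c_def by (auto intro!: mult_nonneg_nonneg)
    have "2 * mu powr (p-1) * (1/2) \<le> K2c p * mu powr (p-1) * \<bar>x\<bar>"
      using K2 xa m0 by (intro mult_mono) auto
    hence h1: "mu powr (p-1) \<le> K2c p * mu powr (p-1) * \<bar>x\<bar>" by simp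
    have h2: "1 \<le> 16 * x^4" using x4 by (simp add: power_divide)
    show ?thesis unfolding abs_le_iff using n1 n0 m0 h1 h2 by (intro conjI; linarith)
  qed
  show "\<bar>rr p n\<bar> \<le> 304 * mu powr (p-2) + 16 * M * x^4"
  proof (cases "x \<ge> -1/2")
    case True
    have "mu * (1/2) \<le> mu * (1 + x)" using True mu by (intro mult_left_mono) auto
    hence nmu: "real n \<ge> mu / 2" using nx by simp
    hence n16: "n \<ge> 16" using mu by linarith
    have "\<bar>rr p n\<bar> \<le> 76 * real n powr (p-2)" by (rule rr_large[OF p n16])
    also have "real n powr (p-2) \<le> (mu/2) powr (p-2)" using p mu nmu by (intro powr_mono2') auto
    also have "(mu/2) powr (p-2) = mu powr (p-2) * 2 powr (2 - p)"
    proof -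
      have e1: "(mu/2) powr (p-2) = mu powr (p-2) / 2 powr (p-2)" using mu by (simp add: powr_divide)
      have "(2::real) powr (2-p) = 2 powr (-(p-2))" by simp
      also have "\<dots> = 1 / 2 powr (p-2)" by (rule powr_minus_divide)
      finally show ?thesis using e1 by simp
    qed
    also have "2 powr (2 - p) \<le> 2 powr 2" using p by (intro powr_mono) auto
    hence "mu powr (p-2) * 2 powr (2 - p) \<le> mu powr (p-2) * 4" by (intro mult_left_mono) auto
    finally have "\<bar>rr p n\<bar> \<le> 76 * (mu powr (p-2) * 4)" by simp
    moreover have "0 \<le> 16 * M * x^4" using M by simp
    ultimately show ?thesis by simp
  next
    case False
    have xa: "\<bar>x\<bar> \<ge> 1/2" using False by simp
    have x4: "x^4 \<ge> (1/2)^4"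
    proof -
      have "\<bar>x\<bar>^4 \<ge> (1/2)^4" using xa by (intro power_mono) auto
      thus ?thesis by (simp add: power_abs[symmetric] eval_nat_numeral abs_mult_self_eq)
    qed
    have "M * 1 \<le> M * (16 * x^4)" using M x4 by (intro mult_left_mono) (auto simp: power_divide)
    hence h: "M \<le> 16 * M * x^4" by (simp add: algebra_simps)
    have h2: "0 \<le> 304 * mu powr (p-2)" by simp
    have h3: "\<bar>rr p n\<bar> \<le> M" using M(1) by blast
    show ?thesis using h h2 h3 by linarith
  qed
qed

lemma wsum_bound:
  assumes "\<And>n. n \<le> d \<Longrightarrow> \<bar>f n\<bar> \<le> g n"
  shows "\<bar>\<Sum>n\<le>d. wt d n * f n\<bar> \<le> (\<Sum>n\<le>d. wt d n * g n)"
proof -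
  have "\<bar>\<Sum>n\<le>d. wt d n * f n\<bar> \<le> (\<Sum>n\<le>d. \<bar>wt d n * f n\<bar>)" by (rule sum_abs)
  also have "\<dots> = (\<Sum>n\<le>d. wt d n * \<bar>f n\<bar>)" by (simp add: abs_mult wt_nonneg)
  also have "\<dots> \<le> (\<Sum>n\<le>d. wt d n * g n)" using assms by (intro sum_mono mult_left_mono wt_nonneg) auto
  finally show ?thesis .
qed

lemma lin_helper:
  fixes I Sp Sq A1 A2 A3 X Y W c :: real
  assumes "I = Sp + c*Sq + A3" "A1 = Sp - X" "A2 = Sq - Y" "X + c*Y = W"
  shows "I - W = A1 + c*A2 + A3"
  unfolding assms(1,2,3) assms(4)[symmetric] by (simp add: algebra_simps)

lemma I0_main:
  fixes s :: real assumes s: "0 < s" "s \<le> 2"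
  defines "p \<equiv> s / 2"
  shows "\<exists>K. \<forall>d\<ge>128. \<bar>I0 s d - (real d / 2) powr p * (1 + (5 * p * (p - 1) / 2) / real d)\<bar>
            \<le> K * ((real d / 2) powr p / (real d * sqrt (real d)))"
proof -
  have p: "0 < p" "p \<le> 1" using s by (auto simp: p_def)
  obtain M where M: "M \<ge> 0" "\<forall>n. \<bar>rr p n\<bar> \<le> M" using rr_bounded[OF p] by blast
  define K where "K = 2 * K1c p + 2 * K2c p + 1264 + 48 * M"
  show ?thesis
  proof (intro exI[of _ K] allI impI)
    fix d :: nat assume d: "d \<ge> 128"
    define mu where "mu = real d / 2"
    define P where "P = mu powr p"
    define U where "U = P / (real d * sqrt (real d))"
    define c0 where "c0 = (p^2 - p) / 2"
    define w where "w = wt d"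
    define x where "x = xv d"
    have d0: "real d > 0" "d > 0" using d by auto
    have sd: "sqrt (real d) > 0" using d0 by simp
    have sdd: "sqrt (real d) \<le> real d"
    proof -
      have "real d * 1 \<le> real d * real d" using d by (intro mult_left_mono) auto
      hence "sqrt (real d) \<le> sqrt (real d * real d)" by (intro real_sqrt_le_mono) simp
      thus ?thesis using d0 by simp
    qed
    have mu1: "mu \<ge> 1" using d by (simp add: mu_def)
    have P1: "P \<ge> 1"
    proof -
      have "1 powr p \<le> mu powr p" using mu1 p by (intro powr_mono2) auto
      thus ?thesis by (simp add: P_def)
    qed
    have mup1: "mu powr (p - 1) = 2 * P / real d"
      using mu1 by (simp add: P_def powr_diff mu_def)
    have mup2: "mu powr (p - 2) = 4 * P / (real d)^2"
      using mu1 by (simp add: P_def powr_diff mu_def powr_numeral power2_eq_square)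
    have U0: "U > 0" using P1 d0 sd by (simp add: U_def)
    have dd: "real d * sqrt (real d) \<le> (real d)^2"
      using sdd d0 by (simp add: power2_eq_square)
    have Ud2: "P / (real d)^2 \<le> U"
      unfolding U_def using dd P1 d0 sd by (intro divide_left_mono) auto
    have Ud2': "1 / (real d)^2 \<le> U"
    proof -
      have "1 / (real d)^2 \<le> P / (real d)^2" using P1 by (intro divide_right_mono) auto
      thus ?thesis using Ud2 by simp
    qed
    define A1 where "A1 = (\<Sum>n\<le>d. w n * (real n powr p - P * (1 + p * x n + c0 * (x n)^2)))"
    define A2 where "A2 = (\<Sum>n\<le>d. w n * (real n powr (p - 1) - mu powr (p - 1)))"
    define A3 where "A3 = (\<Sum>n\<le>d. w n * rr p n)"
    have S1: "(\<Sum>n\<le>d. w n * (P * (1 + p * x n + c0 * (x n)^2))) = P * (1 + c0 / real d)"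
    proof -
      have "(\<Sum>n\<le>d. w n * (P * (1 + p * x n + c0 * (x n)^2)))
          = (\<Sum>n\<le>d. P * w n + (P * p) * (w n * x n) + (P * c0) * (w n * (x n)^2))"
        by (intro sum.cong refl) (simp add: algebra_simps)
      also have "\<dots> = P * (\<Sum>n\<le>d. w n) + (P * p) * (\<Sum>n\<le>d. w n * x n) + (P * c0) * (\<Sum>n\<le>d. w n * (x n)^2)"
        by (simp only: sum.distrib sum_distrib_left)
      also have "\<dots> = P * (1 + c0 / real d)"
        unfolding w_def x_def using d0 by (simp add: mom0 mom1 mom2 algebra_simps)
      finally show ?thesis .
    qed
    have S2: "(\<Sum>n\<le>d. w n * mu powr (p - 1)) = mu powr (p - 1)"
      unfolding w_def by (simp add: sum_distrib_right[symmetric] mom0)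
    have I0e: "I0 s d = (\<Sum>n\<le>d. w n * real n powr p) + p * (p - 1) * (\<Sum>n\<le>d. w n * real n powr (p - 1)) + A3"
    proof -
      have "I0 s d = (\<Sum>n\<le>d. w n * (real n powr p + p * (p - 1) * real n powr (p - 1) + rr p n))"
        unfolding w_def p_def using I0_expand[OF s(1)] by simp
      also have "\<dots> = (\<Sum>n\<le>d. w n * real n powr p + (p * (p - 1)) * (w n * real n powr (p - 1)) + w n * rr p n)"
        by (intro sum.cong refl) (simp add: algebra_simps)
      also have "\<dots> = (\<Sum>n\<le>d. w n * real n powr p) + p * (p - 1) * (\<Sum>n\<le>d. w n * real n powr (p - 1)) + A3"
        unfolding A3_def by (simp only: sum.distrib sum_distrib_left)
      finally show ?thesis .
    qed
    have A1e: "A1 = (\<Sum>n\<le>d. w n * real n powr p) - P * (1 + c0 / real d)"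
      unfolding A1_def S1[symmetric] by (simp add: sum_subtractf right_diff_distrib)
    have A2e: "A2 = (\<Sum>n\<le>d. w n * real n powr (p - 1)) - mu powr (p - 1)"
      unfolding A2_def right_diff_distrib sum_subtractf S2 ..
    have key: "P * c0 / real d + p * (p - 1) * mu powr (p - 1) = P * ((5 * p * (p - 1) / 2) / real d)"
      unfolding mup1 c0_def using d0 by (simp add: field_simps power2_eq_square)
    have Eeq: "I0 s d - P * (1 + (5 * p * (p - 1) / 2) / real d) = A1 + p * (p - 1) * A2 + A3"
    proof (rule lin_helper[OF I0e A1e A2e])
      show "P * (1 + c0 / real d) + p * (p - 1) * mu powr (p - 1) = P * (1 + (5 * p * (p - 1) / 2) / real d)"
        using key by (simp add: distrib_left)
    qed
    have pw: "\<And>n. n \<le> d \<Longrightarrow>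
        \<bar>real n powr p - P * (1 + p * x n + c0 * (x n)^2)\<bar> \<le> P * K1c p * \<bar>x n\<bar>^3 \<and>
        \<bar>real n powr (p-1) - mu powr (p-1)\<bar> \<le> K2c p * mu powr (p-1) * \<bar>x n\<bar> + 16 * (x n)^4 \<and>
        \<bar>rr p n\<bar> \<le> 304 * mu powr (p-2) + 16 * M * (x n)^4"
      using pointwise[OF p d _ M(2) M(1)] unfolding P_def mu_def x_def c0_def by blast
    have B1: "\<bar>A1\<bar> \<le> 2 * K1c p * U"
    proof -
      have "\<bar>A1\<bar> \<le> (\<Sum>n\<le>d. w n * (P * K1c p * \<bar>x n\<bar>^3))"
        unfolding A1_def w_def using pw by (intro wsum_bound) auto
      also have "\<dots> = P * K1c p * (\<Sum>n\<le>d. w n * \<bar>x n\<bar>^3)"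
        by (simp add: sum_distrib_left algebra_simps)
      also have "\<dots> \<le> P * K1c p * (2 / (real d * sqrt (real d)))"
        unfolding w_def x_def using abs_mom3[OF d0(2)] P1 K_nonneg by (intro mult_left_mono) auto
      also have "\<dots> = 2 * K1c p * U" by (simp add: U_def)
      finally show ?thesis .
    qed
    have B2: "\<bar>A2\<bar> \<le> (2 * K2c p + 48) * U"
    proof -
      have "\<bar>A2\<bar> \<le> (\<Sum>n\<le>d. w n * (K2c p * mu powr (p-1) * \<bar>x n\<bar> + 16 * (x n)^4))"
        unfolding A2_def w_def using pw by (intro wsum_bound) auto
      also have "\<dots> = K2c p * mu powr (p-1) * (\<Sum>n\<le>d. w n * \<bar>x n\<bar>) + 16 * (\<Sum>n\<le>d. w n * (x n)^4)"
        by (simp add: sum_distrib_left sum.distrib algebra_simps)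
      also have "\<dots> \<le> K2c p * mu powr (p-1) * (1 / sqrt (real d)) + 16 * (3 / (real d)^2)"
        unfolding w_def x_def using abs_mom1[OF d0(2)] mom4[OF d0(2)] K_nonneg
        by (intro add_mono mult_left_mono) auto
      also have "K2c p * mu powr (p-1) * (1 / sqrt (real d)) = 2 * K2c p * U"
        unfolding mup1 U_def by (simp add: field_simps)
      also have "16 * (3 / (real d)^2) \<le> 48 * U" using Ud2' by simp
      finally show ?thesis by (simp add: algebra_simps)
    qed
    have B3: "\<bar>A3\<bar> \<le> (1216 + 48 * M) * U"
    proof -
      have "\<bar>A3\<bar> \<le> (\<Sum>n\<le>d. w n * (304 * mu powr (p-2) + 16 * M * (x n)^4))"
        unfolding A3_def w_def using pw by (intro wsum_bound) auto
      also have "\<dots> = 304 * mu powr (p-2) * (\<Sum>n\<le>d. w n) + 16 * M * (\<Sum>n\<le>d. w n * (x n)^4)"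
        by (simp add: sum_distrib_left sum_distrib_right sum.distrib algebra_simps)
      also have "\<dots> \<le> 304 * mu powr (p-2) * 1 + 16 * M * (3 / (real d)^2)"
        unfolding w_def x_def using mom0 mom4[OF d0(2)] M by (intro add_mono mult_left_mono) auto
      also have "304 * mu powr (p-2) * 1 = 1216 * (P / (real d)^2)" unfolding mup2 by simp
      also have "1216 * (P / (real d)^2) \<le> 1216 * U" using Ud2 by simp
      also have "16 * M * (3 / (real d)^2) \<le> 48 * M * U"
      proof -
        have "(48 * M) * (1 / (real d)^2) \<le> (48 * M) * U" using Ud2' M by (intro mult_left_mono) auto
        thus ?thesis by simp
      qed
      finally show ?thesis by (simp add: algebra_simps)
    qed
    have pp: "\<bar>p * (p - 1)\<bar> \<le> 1" using p by (simp add: abs_mult abs_le_iff mult_le_one)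
    have "\<bar>p * (p - 1) * A2\<bar> \<le> 1 * \<bar>A2\<bar>" unfolding abs_mult[of "p * (p-1)"] using pp
      by (intro mult_right_mono) auto
    hence "\<bar>A1 + p * (p - 1) * A2 + A3\<bar> \<le> 2 * K1c p * U + (2 * K2c p + 48) * U + (1216 + 48 * M) * U"
      using B1 B2 B3 by (simp add: abs_le_iff) linarith
    also have "\<dots> = K * U" by (simp add: K_def algebra_simps)
    finally show "\<bar>I0 s d - (real d / 2) powr p * (1 + (5 * p * (p - 1) / 2) / real d)\<bar>
            \<le> K * ((real d / 2) powr p / (real d * sqrt (real d)))"
      using Eeq by (simp add: U_def P_def mu_def)
  qed
qed

lemma powlim:
  fixes u :: "nat \<Rightarrow> real" and q c :: real
  assumes q: "q \<le> 2" and lim: "(\<lambda>d. real d * u d) \<longlonglongrightarrow> c"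
  shows "(\<lambda>d. real d * ((1 + u d) powr q - 1)) \<longlonglongrightarrow> q * c"
proof -
  have "(\<lambda>d. real d * u d * (1 / real d)) \<longlonglongrightarrow> c * 0"
    by (intro tendsto_intros lim)
  moreover have "eventually (\<lambda>d. real d * u d * (1 / real d) = u d) sequentially"
    using eventually_gt_at_top[of "0::nat"] by eventually_elim simp
  ultimately have u0: "u \<longlonglongrightarrow> 0" by (simp add: Lim_transform_eventually)
  have ev: "eventually (\<lambda>d. \<bar>u d\<bar> < 1/2) sequentially"
    using u0[unfolded tendsto_iff dist_real_def, rule_format, of "1/2"] by simp
  define B where "B = \<bar>\<Prod>j<2. (q - real j)\<bar> / fact 2 * 2 powr (real 2 - q)"
  have TB: "\<bar>(1 + y) powr q - (1 + q * y)\<bar> \<le> B * y^2" if y: "\<bar>y\<bar> < 1/2" for y :: real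
  proof -
    have "\<bar>(1 + y) powr q - (\<Sum>m<2. (\<Prod>j<m. (q - real j)) / fact m * y^m)\<bar> \<le> B * \<bar>y\<bar>^2"
      unfolding B_def by (rule powr_taylor) (use q y in auto)
    moreover have "(\<Sum>m<2. (\<Prod>j<m. (q - real j)) / fact m * y^m) = 1 + q * y"
      by (simp add: eval_nat_numeral)
    ultimately show ?thesis by simp
  qed
  define R where "R d = (1 + u d) powr q - 1 - q * u d" for d
  have g0: "(\<lambda>d. B * \<bar>real d * u d\<bar> * \<bar>u d\<bar>) \<longlonglongrightarrow> B * \<bar>c\<bar> * \<bar>0\<bar>"
    by (intro tendsto_intros lim u0)
  have "(\<lambda>d. real d * R d) \<longlonglongrightarrow> 0"
  proof (rule Lim_null_comparison)
    show "eventually (\<lambda>d. norm (real d * R d) \<le> B * \<bar>real d * u d\<bar> * \<bar>u d\<bar>) sequentially"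
      using ev
    proof eventually_elim
      case (elim d)
      have "\<bar>R d\<bar> \<le> B * (u d)^2" using TB[OF elim] by (simp add: R_def algebra_simps)
      hence "real d * \<bar>R d\<bar> \<le> real d * (B * (u d)^2)" by (intro mult_left_mono) auto
      thus ?case by (simp add: abs_mult power2_eq_square algebra_simps)
    qed
    show "(\<lambda>d. B * \<bar>real d * u d\<bar> * \<bar>u d\<bar>) \<longlonglongrightarrow> 0" using g0 by simp
  qed
  hence "(\<lambda>d. q * (real d * u d) + real d * R d) \<longlonglongrightarrow> q * c + 0"
    by (intro tendsto_intros lim)
  moreover have "(\<lambda>d. q * (real d * u d) + real d * R d) = (\<lambda>d. real d * ((1 + u d) powr q - 1))"
    by (simp add: R_def algebra_simps)
  ultimately show ?thesis by simp
qed

theorem mainTheorem2: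
  fixes s :: real
  assumes "0 < s" and "s \<le> 2"
  shows "((\<lambda>d::nat. (sigma0 s d)\<^sup>2 - (2 / real d + 5 * (2 - s) / (2 * (real d)\<^sup>2)))
           \<in> o(\<lambda>d. 1 / (real d)\<^sup>2)) \<and>
         ((\<lambda>d::nat. sigma0 s d - (sqrt 2 / sqrt (real d)
              + 5 * sqrt 2 * (2 - s) / (8 * real d * sqrt (real d))))
           \<in> o(\<lambda>d. 1 / (real d * sqrt (real d))))"
proof -
  have s: "0 < s" "s \<le> 2" using assms by auto
  define p where "p = s / 2"
  have p: "0 < p" "p \<le> 1" using s by (auto simp: p_def)
  define a where "a = 5 * p * (p - 1) / 2"
  define P where "P d = (real d / 2) powr p" for d :: nat
  obtain K where K: "\<forall>d\<ge>128. \<bar>I0 s d - P d * (1 + a / real d)\<bar> \<le> K * (P d / (real d * sqrt (real d)))"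
    using I0_main[OF s] unfolding p_def[symmetric] P_def a_def by blast
  define u where "u d = I0 s d / P d - 1" for d
  have Ppos: "P d > 0" if "d > 0" for d using that by (simp add: P_def)
  have ul: "(\<lambda>d. real d * u d) \<longlonglongrightarrow> a"
  proof -
    have l0: "((\<lambda>y. K / sqrt y) \<longlongrightarrow> 0) at_top" by real_asymp
    have l1: "(\<lambda>d. K / sqrt (real d)) \<longlonglongrightarrow> 0"
      using filterlim_compose[OF l0 filterlim_real_sequentially] by (simp add: o_def)
    have "(\<lambda>d. real d * u d - a) \<longlonglongrightarrow> 0"
    proof (rule Lim_null_comparison[OF _ l1])
      show "eventually (\<lambda>d. norm (real d * u d - a) \<le> K / sqrt (real d)) sequentially"
        using eventually_ge_at_top[of "128::nat"]
      proof eventually_elim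
        case (elim d)
        have d0: "real d > 0" using elim by simp
        have P0: "P d > 0" using Ppos elim by simp
        have e: "real d * u d - a = (real d / P d) * (I0 s d - P d * (1 + a / real d))"
          unfolding u_def using d0 P0 by (simp add: field_simps)
        have "\<bar>real d * u d - a\<bar> = (real d / P d) * \<bar>I0 s d - P d * (1 + a / real d)\<bar>"
          unfolding e using d0 P0 by (simp add: abs_mult)
        also have "\<dots> \<le> (real d / P d) * (K * (P d / (real d * sqrt (real d))))"
          using K elim d0 P0 by (intro mult_left_mono) auto
        also have "\<dots> = K / sqrt (real d)" using d0 P0 by (simp add: field_simps)
        finally show ?case by simp
      qed
    qed
    thus ?thesis by (simp add: LIM_zero_iff)
  qed
  define v where "v d = (1 + u d) powr (-1/p) - 1" for d
  have vl: "(\<lambda>d. real d * v d) \<longlonglongrightarrow> 5 * (2 - s) / 4"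
  proof -
    have L1: "(\<lambda>d. real d * v d) \<longlonglongrightarrow> (-1/p) * a"
      unfolding v_def by (rule powlim[OF _ ul]) (use p in \<open>simp add: divide_simps\<close>)
    have e: "(-1/p) * a = 5 * (2 - s) / 4" using p by (simp add: a_def p_def field_simps)
    show ?thesis using L1 unfolding e .
  qed
  define z where "z d = (1 + v d) powr (1/2) - 1" for d
  have zl: "(\<lambda>d. real d * z d) \<longlonglongrightarrow> 5 * (2 - s) / 8"
  proof -
    have "(\<lambda>d. real d * z d) \<longlonglongrightarrow> (1/2) * (5 * (2 - s) / 4)"
      unfolding z_def by (rule powlim[OF _ vl]) simp
    thus ?thesis by simp
  qed
  have sq: "(sigma0 s d)^2 = (2 / real d) * (1 + v d)" if d: "d > 0" for d
  proof -
    have d0: "real d > 0" using d by simp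
    have P0: "P d > 0" using Ppos d by simp
    have "(sigma0 s d)^2 = I0 s d powr (-1/s) * I0 s d powr (-1/s)"
      unfolding sigma0_def by (simp add: power2_eq_square)
    also have "\<dots> = I0 s d powr (-1/p)"
      by (simp add: powr_add[symmetric] p_def)
    also have "I0 s d = P d * (1 + u d)" unfolding u_def using P0 by simp
    also have "(P d * (1 + u d)) powr (-1/p) = P d powr (-1/p) * (1 + v d)"
      by (simp add: powr_mult v_def)
    also have "P d powr (-1/p) = 2 / real d"
      unfolding P_def using p d0 by (simp add: powr_powr powr_minus_divide)
    finally show ?thesis .
  qed
  have sg: "sigma0 s d = sqrt (2 / real d) * (1 + z d)" if d: "d > 0" for d
  proof -
    have s0: "sigma0 s d \<ge> 0" by (simp add: sigma0_def)
    have v0: "1 + v d \<ge> 0" by (simp add: v_def)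
    have "sigma0 s d = sqrt ((sigma0 s d)^2)" using s0 by simp
    also have "\<dots> = sqrt ((2 / real d) * (1 + v d))" by (simp only: sq[OF d])
    also have "\<dots> = sqrt (2 / real d) * sqrt (1 + v d)" by (rule real_sqrt_mult)
    also have "sqrt (1 + v d) = 1 + z d" unfolding z_def using v0 by (simp add: powr_half_sqrt)
    finally show ?thesis .
  qed
  have part1: "(\<lambda>d::nat. (sigma0 s d)\<^sup>2 - (2 / real d + 5 * (2 - s) / (2 * (real d)\<^sup>2)))
           \<in> o(\<lambda>d. 1 / (real d)\<^sup>2)"
  proof (rule smalloI_tendsto)
    show "eventually (\<lambda>d::nat. 1 / (real d)^2 \<noteq> 0) at_top"
      using eventually_gt_at_top[of "0::nat"] by eventually_elim simp
    have "(\<lambda>d. 2 * (real d * v d) - 5 * (2 - s) / 2) \<longlonglongrightarrow> 2 * (5 * (2 - s) / 4) - 5 * (2 - s) / 2"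
      by (intro tendsto_intros vl)
    moreover have "2 * (5 * (2 - s) / 4) - 5 * (2 - s) / 2 = (0::real)" by (simp add: field_simps)
    ultimately have l: "(\<lambda>d. 2 * (real d * v d) - 5 * (2 - s) / 2) \<longlonglongrightarrow> 0" by metis
    moreover have "eventually (\<lambda>d. 2 * (real d * v d) - 5 * (2 - s) / 2 =
        ((sigma0 s d)\<^sup>2 - (2 / real d + 5 * (2 - s) / (2 * (real d)\<^sup>2))) / (1 / (real d)\<^sup>2)) sequentially"
      using eventually_gt_at_top[of "0::nat"]
    proof eventually_elim
      case (elim d)
      show ?case unfolding sq[OF elim] using elim by (simp add: field_simps power2_eq_square)
    qed
    ultimately show "((\<lambda>d. ((sigma0 s d)\<^sup>2 - (2 / real d + 5 * (2 - s) / (2 * (real d)\<^sup>2))) / (1 / (real d)\<^sup>2)) \<longlongrightarrow> 0) at_top"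
      by (rule Lim_transform_eventually)
  qed
  have part2: "(\<lambda>d::nat. sigma0 s d - (sqrt 2 / sqrt (real d)
              + 5 * sqrt 2 * (2 - s) / (8 * real d * sqrt (real d))))
           \<in> o(\<lambda>d. 1 / (real d * sqrt (real d)))"
  proof (rule smalloI_tendsto)
    show "eventually (\<lambda>d::nat. 1 / (real d * sqrt (real d)) \<noteq> 0) at_top"
      using eventually_gt_at_top[of "0::nat"] by eventually_elim simp
    have "(\<lambda>d. sqrt 2 * (real d * z d) - 5 * sqrt 2 * (2 - s) / 8) \<longlonglongrightarrow> sqrt 2 * (5 * (2 - s) / 8) - 5 * sqrt 2 * (2 - s) / 8"
      by (intro tendsto_intros zl)
    moreover have "sqrt 2 * (5 * (2 - s) / 8) - 5 * sqrt 2 * (2 - s) / 8 = (0::real)" by (simp add: field_simps)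
    ultimately have l: "(\<lambda>d. sqrt 2 * (real d * z d) - 5 * sqrt 2 * (2 - s) / 8) \<longlonglongrightarrow> 0" by metis
    moreover have "eventually (\<lambda>d. sqrt 2 * (real d * z d) - 5 * sqrt 2 * (2 - s) / 8 =
        (sigma0 s d - (sqrt 2 / sqrt (real d) + 5 * sqrt 2 * (2 - s) / (8 * real d * sqrt (real d)))) / (1 / (real d * sqrt (real d)))) sequentially"
      using eventually_gt_at_top[of "0::nat"]
    proof eventually_elim
      case (elim d)
      have d0: "real d > 0" using elim by simp
      have sd: "sqrt (real d) > 0" using d0 by simp
      show ?case unfolding sg[OF elim] real_sqrt_divide using d0 sd by (simp add: field_simps)
    qed
    ultimately show "((\<lambda>d. (sigma0 s d - (sqrt 2 / sqrt (real d) + 5 * sqrt 2 * (2 - s) / (8 * real d * sqrt (real d)))) / (1 / (real d * sqrt (real d)))) \<longlongrightarrow> 0) at_top"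
      by (rule Lim_transform_eventually)
  qed
  show ?thesis using part1 part2 by blast
qed

end
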